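(* Let $k\equiv5\pmod{10}$. Then $\operatorname{Ker}\nu_{G^k}=\{M\in\Gamma_{\theta,5}: M\equiv\pm\begin{pmatrix}1&0\\0&1\end{pmatrix}\pmod5\}$.
   Context: $\Gamma_{\theta,5}=\{M\in SL(2,\mathbb{Z}): M\equiv\pm\begin{pmatrix}1&0\\0&1\end{pmatrix}\text{ or }\pm\begin{pmatrix}0&-1\\1&0\end{pmatrix}\pmod 5\}$. For $M=\begin{pmatrix} a&b\\ c&d\end{pmatrix}\in\Gamma_{\theta,5}$ define $g(M)=\frac{6b}{5}+\frac{2ab}{5}+\frac{2cd}{5}$ if $M\equiv I$, $\frac{24b}{5}+\frac{2ab}{5}+\frac{2cd}{5}$ if $M\equiv -I$, $5+\frac{6d}{5}+\frac{2ab}{5}+\frac{2cd}{5}$ if $M\equiv\begin{pmatrix}0&-1\\1&0\end{pmatrix}$, $5-\frac{6d}{5}+\frac{2ab}{5}+\frac{2cd}{5}$ if $M\equiv\begin{pmatrix}0&1\\-1&0\end{pmatrix}$ (all mod 5). For $k\in\mathbb{Z}$, $\nu_{G^k}(M)=\exp\!\left(\frac{\pi i k}{5}g(M)\right)$; this is the multiplier system of $G^k$, where $G(\tau)=\eta^6(\tau)/\big(\theta\begin{bmatrix}3/5\\3/5\end{bmatrix}(0,\tau)\theta\begin{bmatrix}3/5\\7/5\end{bmatrix}(0,\tau)\big)$, i.e. $G^k(M\tau)=\nu_{G^k}(M)(c\tau+d)^{2k}G^k(\tau)$. $\operatorname{Ker}\nu_{G^k}=\{M\in\Gamma_{\theta,5}:\nu_{G^k}(M)=1\}$.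 *)

theory Defs
  imports Complex_Main
begin

text \<open>A 2x2 integer matrix (a b; c d) is represented as the tuple (a, b, c, d).\<close>
type_synonym mat2 = "int \<times> int \<times> int \<times> int"

definition SL2Z :: "mat2 set" where
  "SL2Z = {(a, b, c, d). a * d - b * c = 1}"

definition mcong5 :: "mat2 \<Rightarrow> mat2 \<Rightarrow> bool" where
  "mcong5 M N = (case M of (a, b, c, d) \<Rightarrow> case N of (a', b', c', d') \<Rightarrow>
     a mod 5 = a' mod 5 \<and> b mod 5 = b' mod 5 \<and> c mod 5 = c' mod 5 \<and> d mod 5 = d' mod 5)"

definition I2 :: mat2 where "I2 = (1, 0, 0, 1)"
definition negI2 :: mat2 where "negI2 = (-1, 0, 0, -1)"
definition S2 :: mat2 where "S2 = (0, -1, 1, 0)"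
definition negS2 :: mat2 where "negS2 = (0, 1, -1, 0)"

definition Gamma_theta5 :: "mat2 set" where
  "Gamma_theta5 = {M \<in> SL2Z. mcong5 M I2 \<or> mcong5 M negI2 \<or> mcong5 M S2 \<or> mcong5 M negS2}"

text \<open>The exponent g(M); the four congruence cases are mutually exclusive.
  Outside of Gamma_theta5 the value is irrelevant (set to 0).\<close>
definition gfun :: "mat2 \<Rightarrow> real" where
  "gfun M = (case M of (a, b, c, d) \<Rightarrow>
     (let r = 2 * real_of_int (a * b) / 5 + 2 * real_of_int (c * d) / 5 in
      if mcong5 M I2 then 6 * real_of_int b / 5 + r
      else if mcong5 M negI2 then 24 * real_of_int b / 5 + r
      else if mcong5 M S2 then 5 + 6 * real_of_int d / 5 + r
      else if mcong5 M negS2 then 5 - 6 * real_of_int d / 5 + r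
      else 0))"

definition nuG :: "int \<Rightarrow> mat2 \<Rightarrow> complex" where
  "nuG k M = exp (\<i> * complex_of_real (pi * real_of_int k * gfun M / 5))"

definition KerNu :: "int \<Rightarrow> mat2 set" where
  "KerNu k = {M \<in> Gamma_theta5. nuG k M = 1}"

end

theory Submission
  imports Defs "HOL-Analysis.Complex_Transcendental"
begin

lemma exp_pi_int: "exp (\<i> * complex_of_real (pi * real_of_int t)) = 1 \<longleftrightarrow> even t"
proof -
  have "exp (\<i> * complex_of_real (pi * real_of_int t)) = 1 \<longleftrightarrow>
        (\<exists>n::int. pi * real_of_int t = of_int (2 * n) * pi)"
    by (simp add: exp_eq_1)
  also have "\<dots> \<longleftrightarrow> (\<exists>n::int. t = 2 * n)"
  proof
    assume "\<exists>n::int. pi * real_of_int t = of_int (2 * n) * pi"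
    then obtain n :: int where "pi * real_of_int t = of_int (2 * n) * pi" by blast
    then have "real_of_int t = real_of_int (2*n)" by simp
    then show "\<exists>n::int. t = 2 * n" by (intro exI[of _ n]) linarith
  next
    assume "\<exists>n::int. t = 2 * n"
    then show "\<exists>n::int. pi * real_of_int t = of_int (2 * n) * pi" by auto
  qed
  also have "\<dots> \<longleftrightarrow> even t" by (auto simp: dvd_def)
  finally show ?thesis .
qed

lemma key:
  assumes M: "M \<in> Gamma_theta5" and k: "k mod 10 = 5"
  shows "\<exists>t::int. pi * real_of_int k * gfun M / 5 = pi * real_of_int t \<and>
           (even t \<longleftrightarrow> mcong5 M I2 \<or> mcong5 M negI2)"
proof -
  obtain a b c d where Md: "M = (a, b, c, d)" by (cases M) auto
  define m where "m = k div 10"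
  have km: "k = 10*m + 5" using k div_mult_mod_eq[of k 10] unfolding m_def by linarith
  define a' where "a' = a div 5"
  define b' where "b' = b div 5"
  define c' where "c' = c div 5"
  define d' where "d' = d div 5"
  have ea: "a = 5*a' + a mod 5" and eb: "b = 5*b' + b mod 5"
   and ec: "c = 5*c' + c mod 5" and ed: "d = 5*d' + d mod 5"
    by (simp_all add: a'_def b'_def c'_def d'_def)
  from M have cs: "mcong5 M I2 \<or> mcong5 M negI2 \<or> mcong5 M S2 \<or> mcong5 M negS2"
    by (simp add: Gamma_theta5_def)
  show ?thesis
  proof -
    { assume h: "mcong5 M I2"
      then have m5: "a mod 5 = 1" "b mod 5 = 0" "c mod 5 = 0" "d mod 5 = 1"
        by (simp_all add: Md mcong5_def I2_def)
      have g: "gfun M = 2 * real_of_int (3*b' + (5*a'+1)*b' + c'*(5*d'+1))"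
        using h ea eb ec ed m5 by (simp add: Md gfun_def Let_def algebra_simps)
      define t where "t = (2*m+1)*2*(3*b' + (5*a'+1)*b' + c'*(5*d'+1))"
      have "pi * real_of_int k * gfun M / 5 = pi * real_of_int t"
        by (simp add: g km t_def algebra_simps)
      moreover have "even t" by (simp add: t_def)
      ultimately have ?thesis using h by blast }
    moreover
    { assume h: "mcong5 M negI2"
      then have m5: "a mod 5 = 4" "b mod 5 = 0" "c mod 5 = 0" "d mod 5 = 4"
        by (simp_all add: Md mcong5_def negI2_def)
      have nI: "\<not> mcong5 M I2" using m5 by (simp add: Md mcong5_def I2_def)
      have g: "gfun M = 2 * real_of_int (12*b' + (5*a'+4)*b' + c'*(5*d'+4))"
        using h nI ea eb ec ed m5 by (simp add: Md gfun_def Let_def algebra_simps)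
      define t where "t = (2*m+1)*2*(12*b' + (5*a'+4)*b' + c'*(5*d'+4))"
      have "pi * real_of_int k * gfun M / 5 = pi * real_of_int t"
        by (simp add: g km t_def algebra_simps)
      moreover have "even t" by (simp add: t_def)
      ultimately have ?thesis using h by blast }
    moreover
    { assume h: "mcong5 M S2"
      then have m5: "a mod 5 = 0" "b mod 5 = 4" "c mod 5 = 1" "d mod 5 = 0"
        by (simp_all add: Md mcong5_def S2_def)
      have nI: "\<not> mcong5 M I2" "\<not> mcong5 M negI2"
        using m5 by (simp_all add: Md mcong5_def I2_def negI2_def)
      have g: "gfun M = 5 + 2 * real_of_int (3*d' + a'*(5*b'+4) + (5*c'+1)*d')"
        using h nI ea eb ec ed m5 by (simp add: Md gfun_def Let_def algebra_simps)
      define t where "t = (2*m+1)*(5 + 2*(3*d' + a'*(5*b'+4) + (5*c'+1)*d'))"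
      have "pi * real_of_int k * gfun M / 5 = pi * real_of_int t"
        by (simp add: g km t_def algebra_simps)
      moreover have "odd t" by (simp add: t_def)
      ultimately have ?thesis using nI by blast }
    moreover
    { assume h: "mcong5 M negS2"
      then have m5: "a mod 5 = 0" "b mod 5 = 1" "c mod 5 = 4" "d mod 5 = 0"
        by (simp_all add: Md mcong5_def negS2_def)
      have nI: "\<not> mcong5 M I2" "\<not> mcong5 M negI2" "\<not> mcong5 M S2"
        using m5 by (simp_all add: Md mcong5_def I2_def negI2_def S2_def)
      have g: "gfun M = 5 + 2 * real_of_int (-3*d' + a'*(5*b'+1) + (5*c'+4)*d')"
        using h nI ea eb ec ed m5 by (simp add: Md gfun_def Let_def algebra_simps)
      define t where "t = (2*m+1)*(5 + 2*(-3*d' + a'*(5*b'+1) + (5*c'+4)*d'))"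
      have "pi * real_of_int k * gfun M / 5 = pi * real_of_int t"
        by (simp add: g km t_def algebra_simps)
      moreover have "odd t" by (simp add: t_def)
      ultimately have ?thesis using nI by blast }
    ultimately show ?thesis using cs by blast
  qed
qed

theorem mainTheorem10:
  fixes k :: int
  assumes "k mod 10 = 5"
  shows "KerNu k = {M \<in> Gamma_theta5. mcong5 M I2 \<or> mcong5 M negI2}"
proof (rule set_eqI)
  fix M
  show "M \<in> KerNu k \<longleftrightarrow> M \<in> {M \<in> Gamma_theta5. mcong5 M I2 \<or> mcong5 M negI2}"
  proof (cases "M \<in> Gamma_theta5")
    case True
    from key[OF True assms] obtain t :: int where
      t: "pi * real_of_int k * gfun M / 5 = pi * real_of_int t"
         "even t \<longleftrightarrow> mcong5 M I2 \<or> mcong5 M negI2" by blast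
    have "nuG k M = 1 \<longleftrightarrow> even t"
      unfolding nuG_def t(1) by (rule exp_pi_int)
    then show ?thesis using True t(2) by (simp add: KerNu_def)
  next
    case False
    then show ?thesis by (simp add: KerNu_def)
  qed
qed

end
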